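(* Let $k$ be a positive integer. Suppose that $h:\mathbb{H}\to\mathbb{C}$ is holomorphic, $M\in\mathrm{SL}_2(\mathbb{R})$ is elliptic of infinite order, and $\zeta\in\mathbb{C}^\times$ is a root of unity such that $h|M=\zeta h$. Then $h=0$.
   Context: $\mathbb{H}$ is the upper half-plane. For $\gamma=\begin{pmatrix}a&b\\c&d\end{pmatrix}\in\mathrm{GL}_2^+(\mathbb{R})$, $h|\gamma(z)=(\det\gamma)^{k/2}(cz+d)^{-k}h\big(\frac{az+b}{cz+d}\big)$. *)

theory Defs
  imports "HOL-Analysis.Analysis"
begin

definition upper_half_plane :: "complex set" where
  "upper_half_plane = {z. Im z > 0}"

definition SL2R :: "(real^2^2) set" where
  "SL2R = {M. det M = 1}"

definition GL2plus :: "(real^2^2) set" where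
  "GL2plus = {M. det M > 0}"

primrec matpow :: "real^2^2 \<Rightarrow> nat \<Rightarrow> real^2^2" where
  "matpow M 0 = mat 1"
| "matpow M (Suc n) = M ** matpow M n"

definition elliptic :: "real^2^2 \<Rightarrow> bool" where
  "elliptic M \<longleftrightarrow> M \<in> SL2R \<and> \<bar>M$1$1 + M$2$2\<bar> < 2"

definition infinite_order :: "real^2^2 \<Rightarrow> bool" where
  "infinite_order M \<longleftrightarrow> (\<forall>n::nat. n > 0 \<longrightarrow> matpow M n \<noteq> mat 1)"

definition root_of_unity :: "complex \<Rightarrow> bool" where
  "root_of_unity \<zeta> \<longleftrightarrow> (\<exists>n::nat. n > 0 \<and> \<zeta> ^ n = 1)"

definition slash :: "int \<Rightarrow> (complex \<Rightarrow> complex) \<Rightarrow> real^2^2 \<Rightarrow> complex \<Rightarrow> complex" where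
  "slash k h \<gamma> z =
     complex_of_real (det \<gamma> powr (real_of_int k / 2))
     * (complex_of_real (\<gamma>$2$1) * z + complex_of_real (\<gamma>$2$2)) powi (-k)
     * h ((complex_of_real (\<gamma>$1$1) * z + complex_of_real (\<gamma>$1$2))
          / (complex_of_real (\<gamma>$2$1) * z + complex_of_real (\<gamma>$2$2)))"

end

theory Submission imports Defs "HOL-Complex_Analysis.Complex_Analysis" begin

lemma matpow_formula:
  fixes M :: "real^2^2" and \<mu> \<nu> :: complex
  assumes det: "det M = 1" and mn: "\<mu>*\<nu> = 1" and tr: "\<mu> + \<nu> = of_real (M$1$1 + M$2$2)" and ne: "\<mu> \<noteq> \<nu>"
  shows "\<forall>i j. complex_of_real (matpow M n $ i $ j) = (\<mu>^n - \<nu>^n)/(\<mu>-\<nu>) * of_real (M$i$j)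
            - (\<mu>^n*\<nu> - \<nu>^n*\<mu>)/(\<mu>-\<nu>) * (if i = j then 1 else 0)"
proof (induction n)
  case 0
  have "\<mu> - \<nu> \<noteq> 0" using ne by simp
  then show ?case by (auto simp: mat_def field_simps)
next
  case (Suc n)
  define a where "a = complex_of_real (M$1$1)"
  define b where "b = complex_of_real (M$1$2)"
  define c where "c = complex_of_real (M$2$1)"
  define d where "d = complex_of_real (M$2$2)"
  have D: "a*d - b*c = 1" using det unfolding a_def b_def c_def d_def det_2
    by (metis of_real_1 of_real_diff of_real_mult)
  have T: "\<mu> + \<nu> = a + d" using tr by (simp add: a_def d_def)
  have nz: "\<mu> - \<nu> \<noteq> 0" using ne by simp
  have e: "complex_of_real (matpow M (Suc n) $ i $ j) =
     of_real (M$i$1) * of_real (matpow M n $1$j) + of_real (M$i$2) * of_real (matpow M n $2$j)" for i j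
    by (simp add: matrix_matrix_mult_def sum_2)
  show ?case
  proof (intro allI)
    fix i j :: 2
    have d1: "(1::2) \<noteq> 2" by simp
    have key1: "(\<mu>^Suc n - \<nu>^Suc n) = (\<mu>+\<nu>)*(\<mu>^n - \<nu>^n) - (\<mu>^n*\<nu> - \<nu>^n*\<mu>)"
      using mn by (simp add: algebra_simps)
    have k1: "\<mu>^Suc n*\<nu> = \<mu>^n" using mn by (simp add: mult.commute mult.left_commute)
    have k2: "\<nu>^Suc n*\<mu> = \<nu>^n" using mn by (simp add: mult.commute mult.left_commute)
    have key2: "\<mu>^Suc n*\<nu> - \<nu>^Suc n*\<mu> = \<mu>^n - \<nu>^n"
      by (simp only: k1 k2)
    define U where "U = (\<mu>^n - \<nu>^n)/(\<mu>-\<nu>)"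
    define V where "V = (\<mu>^n*\<nu> - \<nu>^n*\<mu>)/(\<mu>-\<nu>)"
    have K1: "(\<mu>^Suc n - \<nu>^Suc n)/(\<mu>-\<nu>) = (a+d)*U - V"
      unfolding key1 T[symmetric] U_def V_def by (metis diff_divide_distrib times_divide_eq_right)
    have K2: "(\<mu>^Suc n*\<nu> - \<nu>^Suc n*\<mu>)/(\<mu>-\<nu>) = U"
      unfolding key2 U_def ..
    have IH: "complex_of_real (matpow M n $ i $ j) = U * of_real (M$i$j) - V * (if i = j then 1 else 0)" for i j
      using Suc U_def V_def by blast
    have bc: "b*c = a*d - 1" using D by (simp add: algebra_simps)
    show "complex_of_real (matpow M (Suc n) $ i $ j) = (\<mu>^Suc n - \<nu>^Suc n)/(\<mu>-\<nu>) * of_real (M$i$j)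
            - (\<mu>^Suc n*\<nu> - \<nu>^Suc n*\<mu>)/(\<mu>-\<nu>) * (if i = j then 1 else 0)"
    proof -
      have c11: "a*(U*a - V) + b*(U*c - 0) = ((a+d)*U - V)*a - U" using bc by algebra
      have c12: "a*(U*b - 0) + b*(U*d - V) = ((a+d)*U - V)*b - 0" by algebra
      have c21: "c*(U*a - V) + d*(U*c - 0) = ((a+d)*U - V)*c - 0" by algebra
      have c22: "c*(U*b - 0) + d*(U*d - V) = ((a+d)*U - V)*d - U" using bc by algebra
      show ?thesis
        unfolding e IH K1 K2
        using exhaust_2[of i] exhaust_2[of j] d1 d1[symmetric]
        apply (elim disjE)
        apply (simp_all only: a_def[symmetric] b_def[symmetric] c_def[symmetric] d_def[symmetric] if_True if_False simp_thms mult_1_right mult_0_right)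
        using c11 c12 c21 c22 by simp_all
    qed
  qed
qed


lemma mu_not_root:
  fixes M :: "real^2^2" and \<mu> \<nu> :: complex
  assumes det: "det M = 1" and mn: "\<mu>*\<nu> = 1" and tr: "\<mu> + \<nu> = of_real (M$1$1 + M$2$2)" and ne: "\<mu> \<noteq> \<nu>"
    and inf: "infinite_order M" and m: "m > 0"
  shows "\<mu>^m \<noteq> 1"
proof
  assume mu: "\<mu>^m = 1"
  have "(\<mu>*\<nu>)^m = 1" using mn by simp
  hence nu: "\<nu>^m = 1" using mu by (simp add: power_mult_distrib)
  have nz: "\<mu> - \<nu> \<noteq> 0" using ne by simp
  have V2: "- ((\<nu> - \<mu>) / (\<mu> - \<nu>)) = 1" using nz by (simp add: field_simps)
  have "\<forall>i j. complex_of_real (matpow M m $ i $ j) = complex_of_real (mat 1 $ i $ j)"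
    using matpow_formula[OF det mn tr ne, of m] V2 by (simp add: mu nu mat_def)
  hence "matpow M m = mat 1" by (simp add: vec_eq_iff)
  thus False using inf m unfolding infinite_order_def by blast
qed

lemma alg1:
  fixes a b c d \<mu> \<nu> w \<tau> \<tau>' :: complex
  assumes D: "a*d - b*c = 1" and mn: "\<mu>*\<nu> = 1" and tr: "\<mu>+\<nu> = a+d" and c: "c \<noteq> 0" and w: "w \<noteq> 1"
    and nw: "\<mu> - \<nu>*w \<noteq> 0" and t1: "c*\<tau> = \<mu> - d" and t2: "c*\<tau>' = \<nu> - d"
  shows "c*((\<tau> - \<tau>'*w)/(1-w)) + d = (\<mu> - \<nu>*w)/(1-w)"
    and "a*((\<tau> - \<tau>'*w)/(1-w)) + b =
          ((\<tau> - \<tau>'*(\<nu>^2*w))/(1-\<nu>^2*w)) * ((\<mu> - \<nu>*w)/(1-w))"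
    and "1 - \<nu>^2*w = \<nu>*(\<mu> - \<nu>*w)"
proof -
  have w1: "1 - w \<noteq> 0" using w by simp
  have "c*(\<tau> - \<tau>'*w) + d*(1-w) = \<mu> - \<nu>*w" using t1 t2 by algebra
  thus "c*((\<tau> - \<tau>'*w)/(1-w)) + d = (\<mu> - \<nu>*w)/(1-w)"
    using w1 by (simp add: field_simps)
  show L: "1 - \<nu>^2*w = \<nu>*(\<mu> - \<nu>*w)" using mn by (simp add: algebra_simps power2_eq_square)
  have nu0: "\<nu> \<noteq> 0" using mn by auto
  have e1: "a*\<tau> + b = \<mu>*\<tau>"
  proof -
    have "c*(a*\<tau> + b) = c*(\<mu>*\<tau>)" using D mn tr t1 by algebra
    thus ?thesis using c by simp
  qed
  have e2: "a*\<tau>' + b = \<nu>*\<tau>'"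
  proof -
    have "c*(a*\<tau>' + b) = c*(\<nu>*\<tau>')" using D mn tr t2 by algebra
    thus ?thesis using c by simp
  qed
  have lhs: "a*((\<tau> - \<tau>'*w)/(1-w)) + b = (\<mu>*\<tau> - \<nu>*\<tau>'*w)/(1-w)"
  proof -
    have "a*(\<tau> - \<tau>'*w) + b*(1-w) = \<mu>*\<tau> - \<nu>*\<tau>'*w" using e1 e2 by algebra
    thus ?thesis using w1 by (simp add: field_simps)
  qed
  have "(\<tau> - \<tau>'*(\<nu>^2*w)) = \<nu>*(\<mu>*\<tau> - \<nu>*\<tau>'*w)" using mn by algebra
  hence rhs: "((\<tau> - \<tau>'*(\<nu>^2*w))/(1-\<nu>^2*w)) = (\<mu>*\<tau> - \<nu>*\<tau>'*w)/(\<mu> - \<nu>*w)"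
    unfolding L using nu0 by simp
  show "a*((\<tau> - \<tau>'*w)/(1-w)) + b =
          ((\<tau> - \<tau>'*(\<nu>^2*w))/(1-\<nu>^2*w)) * ((\<mu> - \<nu>*w)/(1-w))"
    unfolding lhs rhs using nw by simp
qed


lemma Im_Z:
  fixes \<tau> w :: complex
  assumes q: "Im \<tau> > 0" and w: "cmod w < 1"
  shows "Im ((\<tau> - cnj \<tau> * w)/(1-w)) > 0"
proof -
  have "cmod w ^ 2 < 1" using w by (simp add: abs_square_less_1)
  hence uv: "Re w ^2 + Im w ^2 < 1" by (simp add: cmod_power2)
  have u: "Re w < 1" using w abs_Re_le_cmod[of w] by linarith
  have num: "Im (\<tau> - cnj \<tau> * w) * Re (1-w) - Re (\<tau> - cnj \<tau> * w) * Im (1-w) = Im \<tau> * (1 - Re w^2 - Im w^2)"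
    by (simp add: algebra_simps power2_eq_square)
  have den: "(Re (1-w))^2 + (Im (1-w))^2 > 0" using u
    by (simp add: add_pos_nonneg)
  show ?thesis unfolding Im_divide num using q uv den by (simp add: divide_pos_pos)
qed

lemma inv_Z:
  fixes \<tau> z :: complex
  assumes q: "Im \<tau> > 0" and z: "Im z > 0"
  shows "cmod ((z-\<tau>)/(z - cnj \<tau>)) < 1"
    and "(\<tau> - cnj \<tau> * ((z-\<tau>)/(z - cnj \<tau>)))/(1 - (z-\<tau>)/(z - cnj \<tau>)) = z"
proof -
  have "Im (z - cnj \<tau>) > 0" using q z by simp
  hence nz: "z - cnj \<tau> \<noteq> 0" by auto
  have Imt: "Im (\<tau> - cnj \<tau>) > 0" using q by simp
  have nt: "\<tau> - cnj \<tau> \<noteq> 0" proof assume "\<tau> - cnj \<tau> = 0" thus False using Imt by simp qed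
  have sq: "cmod (z-\<tau>)^2 < cmod (z - cnj \<tau>)^2"
    unfolding cmod_power2 using q z by (simp add: power2_eq_square algebra_simps mult_pos_pos)
  hence "cmod (z-\<tau>) < cmod (z - cnj \<tau>)" by (simp add: power_less_imp_less_base)
  thus "cmod ((z-\<tau>)/(z - cnj \<tau>)) < 1" using nz by (simp add: norm_divide divide_less_eq)
  show "(\<tau> - cnj \<tau> * ((z-\<tau>)/(z - cnj \<tau>)))/(1 - (z-\<tau>)/(z - cnj \<tau>)) = z"
  proof -
    have e1: "1 - (z-\<tau>)/(z - cnj \<tau>) = (\<tau> - cnj \<tau>)/(z - cnj \<tau>)" using nz by (simp add: field_simps)
    have e2: "\<tau> - cnj \<tau> * ((z-\<tau>)/(z - cnj \<tau>)) = z*(\<tau> - cnj \<tau>)/(z - cnj \<tau>)"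
      using nz by (simp add: field_simps)
    show ?thesis unfolding e1 e2 using nz nt by simp
  qed
qed


lemma tiny: "(x::complex) \<noteq> 0 \<Longrightarrow> y \<noteq> 0 \<Longrightarrow> n \<noteq> 0 \<Longrightarrow> (x/y)/(n*x) = 1/(n*y)"
  by (simp add: field_simps)

theorem lemma4p2:
  fixes k :: int and h :: "complex \<Rightarrow> complex" and M :: "real^2^2" and \<zeta> :: complex
  assumes "k > 0"
    and "h holomorphic_on upper_half_plane"
    and "M \<in> SL2R" and "elliptic M" and "infinite_order M"
    and "\<zeta> \<noteq> 0" and "root_of_unity \<zeta>"
    and "\<forall>z\<in>upper_half_plane. slash k h M z = \<zeta> * h z"
  shows "\<forall>z\<in>upper_half_plane. h z = 0"
proof -
  note kpos = assms(1) and holh = assms(2) and inf = assms(5) and hyp = assms(8)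
  define ra where "ra = M$1$1"
  define rb where "rb = M$1$2"
  define rc where "rc = M$2$1"
  define rd where "rd = M$2$2"
  have det1: "det M = 1" using assms(3) by (simp add: SL2R_def)
  have Dr: "ra*rd - rb*rc = 1" using det1 by (simp add: det_2 ra_def rb_def rc_def rd_def)
  define t where "t = ra + rd"
  have tr: "\<bar>t\<bar> < 2" using assms(4) by (simp add: elliptic_def t_def ra_def rd_def)
  have t4: "t^2 < 4"
  proof -
    have "\<bar>t\<bar>^2 < 2^2" using tr by (intro power_strict_mono) auto
    thus ?thesis by simp
  qed
  have rc0: "rc \<noteq> 0"
  proof
    assume "rc = 0"
    hence "ra*rd = 1" using Dr by simp
    hence "t^2 = (ra-rd)^2 + 4" unfolding t_def by (simp add: power2_eq_square algebra_simps)
    thus False using t4 by (smt (verit) zero_le_power2)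
  qed
  define s where "s = sqrt (4 - t^2)"
  have s0: "s > 0" using t4 by (simp add: s_def)
  have s2: "s^2 = 4 - t^2" using t4 by (simp add: s_def)
  have sg2: "(sgn rc)^2 = 1" using rc0 by (simp add: power2_eq_square sgn_if)
  define \<mu> where "\<mu> = Complex (t/2) (sgn rc * s/2)"
  define \<nu> where "\<nu> = cnj \<mu>"
  have mn: "\<mu>*\<nu> = 1"
  proof -
    have "(t/2)^2 + (sgn rc * s/2)^2 = 1" using s2 sg2 by (simp add: power_mult_distrib power_divide) (simp add: field_simps)
    thus ?thesis unfolding \<nu>_def \<mu>_def by (simp add: complex_eq_iff power2_eq_square)
  qed
  have trc: "\<mu> + \<nu> = of_real (M$1$1 + M$2$2)" unfolding \<nu>_def \<mu>_def
    by (simp add: complex_eq_iff t_def ra_def rd_def)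
  have ne: "\<mu> \<noteq> \<nu>"
  proof
    assume "\<mu> = \<nu>"
    hence "Im \<mu> = Im \<nu>" by simp
    hence "Im \<mu> = - Im \<mu>" by (simp add: \<nu>_def)
    hence "sgn rc * s = 0" unfolding \<mu>_def by simp
    thus False using rc0 s0 by (simp add: sgn_if split: if_splits)
  qed
  have nmu: "cmod \<mu> = 1"
  proof -
    have "cmod \<mu> ^ 2 = 1" using mn unfolding \<nu>_def by (metis complex_norm_square of_real_eq_1_iff)
    thus ?thesis using norm_ge_zero[of \<mu>] by (auto simp: power2_eq_1_iff)
  qed
  have nnu: "cmod \<nu> = 1" using nmu by (simp add: \<nu>_def)
  define a where "a = complex_of_real (M$1$1)"
  define b where "b = complex_of_real (M$1$2)"
  define c where "c = complex_of_real (M$2$1)"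
  define d where "d = complex_of_real (M$2$2)"
  have D: "a*d - b*c = 1" using Dr unfolding a_def b_def c_def d_def ra_def rb_def rc_def rd_def
    by (metis of_real_1 of_real_diff of_real_mult)
  have T: "\<mu> + \<nu> = a + d" using trc by (simp add: a_def d_def)
  have c0: "c \<noteq> 0" using rc0 by (simp add: c_def rc_def)
  define \<tau> where "\<tau> = (\<mu> - d)/c"
  have t1: "c*\<tau> = \<mu> - d" using c0 by (simp add: \<tau>_def)
  have ct: "cnj \<tau> = (\<nu> - d)/c" by (simp add: \<tau>_def \<nu>_def c_def d_def)
  have t2: "c*cnj \<tau> = \<nu> - d" using c0 by (simp add: ct)
  have Imt: "Im \<tau> > 0"
  proof -
    have "Im \<tau> = (sgn rc * s/2) / rc"
      unfolding \<tau>_def c_def d_def rc_def[symmetric] by (simp add: \<mu>_def Im_divide_of_real)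
    also have "\<dots> = s / (2*\<bar>rc\<bar>)" using rc0 by (simp add: sgn_if abs_if)
    finally show ?thesis using s0 rc0 by simp
  qed
  obtain K where K: "k = int K" "K > 0" using kpos by (metis gr0I int_nat_eq less_le_not_le nat_0_iff of_nat_0_less_iff)
  define Z where "Z = (\<lambda>w. (\<tau> - cnj \<tau> * w)/(1-w))"
  define \<Phi> where "\<Phi> = (\<lambda>w. h (Z w) / (1-w)^K)"
  define l where "l = \<nu>^2"
  define C where "C = \<zeta> * \<mu>^K"
  have nl: "cmod l = 1" using nnu by (simp add: l_def norm_power)
  have w1: "w \<noteq> 1" if "w \<in> ball 0 1" for w :: complex using that by (auto simp: dist_0_norm)
  have ZH: "Z w \<in> upper_half_plane" if "w \<in> ball 0 1" for w
    using Im_Z[OF Imt, of w] that by (simp add: Z_def upper_half_plane_def)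
  have lball: "l*w \<in> ball 0 1" if "w \<in> ball 0 1" for w using that nl by (simp add: norm_mult)
  have func: "\<Phi> (l*w) = C * \<Phi> w" if w: "w \<in> ball 0 1" for w
  proof -
    have nw: "\<mu> - \<nu>*w \<noteq> 0"
    proof
      assume "\<mu> - \<nu>*w = 0"
      hence "cmod \<mu> = cmod (\<nu>*w)" by simp
      thus False using w nmu nnu by (simp add: norm_mult)
    qed
    note A = alg1[OF D mn T c0 w1[OF w] nw t1 t2]
    define z where "z = Z w"
    have cz: "c*z + d = (\<mu> - \<nu>*w)/(1-w)" using A(1) by (simp add: z_def Z_def)
    have czn: "c*z + d \<noteq> 0" unfolding cz using nw w1[OF w] by simp
    have az: "(a*z + b)/(c*z+d) = Z (l*w)" using A(2) czn unfolding cz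
      by (simp add: z_def Z_def l_def)
    have l1: "1 - l*w = \<nu>*(\<mu> - \<nu>*w)" using A(3) by (simp add: l_def)
    have nu0: "\<nu> \<noteq> 0" using mn by auto
    have hz: "slash k h M z = \<zeta> * h z" using hyp ZH[OF w] by (simp add: z_def)
    hence hz2: "inverse ((c*z+d)^K) * h (Z (l*w)) = \<zeta> * h z"
      unfolding slash_def det1 az[symmetric] using K
      by (simp add: a_def b_def c_def d_def power_int_minus)
    have hl: "h (Z (l*w)) = \<zeta> * h z * (c*z+d)^K" using hz2 czn
      by (simp add: field_simps)
    have q: "(c*z+d)/(1 - l*w) = \<mu>/(1-w)"
    proof -
      have "(c*z+d)/(1 - l*w) = ((\<mu> - \<nu>*w)/(1-w)) / (\<nu>*(\<mu> - \<nu>*w))" unfolding cz l1 ..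
      also have "\<dots> = 1/(\<nu>*(1-w))" using nw nu0 w1[OF w] tiny[of "\<mu> - \<nu>*w" "1-w" \<nu>] by simp
      also have "\<dots> = \<mu>/(1-w)" using mn nu0 w1[OF w] by (simp add: field_simps)
      finally show ?thesis .
    qed
    have "\<Phi> (l*w) = \<zeta> * h z * ((c*z+d)/(1 - l*w))^K"
      unfolding \<Phi>_def hl by (simp add: power_divide)
    also have "\<dots> = C * \<Phi> w" unfolding q by (simp add: C_def \<Phi>_def z_def power_divide)
    finally show ?thesis .
  qed
  have holZ: "Z holomorphic_on ball 0 1" unfolding Z_def
    by (intro holomorphic_intros) (use w1 in auto)
  have hol: "\<Phi> holomorphic_on ball 0 1"
  proof -
    have "(h \<circ> Z) holomorphic_on ball 0 1"
      by (rule holomorphic_on_compose_gen[OF holZ holh]) (use ZH in auto)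
    thus ?thesis unfolding \<Phi>_def
      by (intro holomorphic_intros) (auto simp: o_def dest: w1)
  qed
  obtain N where N: "N > 0" "\<zeta>^N = 1" using assms(7) by (auto simp: root_of_unity_def)
  have coeff: "(deriv^^n) \<Phi> 0 = 0" for n
  proof (rule ccontr)
    assume nz: "(deriv^^n) \<Phi> 0 \<noteq> 0"
    have h1: "(deriv^^n) (\<lambda>w. \<Phi> (l*w)) 0 = l^n * (deriv^^n) \<Phi> 0"
    proof -
      have "(deriv^^n) (\<lambda>w. \<Phi> (l*w)) 0 = l^n * (deriv^^n) \<Phi> (l*0)"
        by (rule higher_deriv_compose_linear[OF hol open_ball[of 0 1] open_ball[of 0 1] _ lball]) simp_all
      thus ?thesis by simp
    qed
    have h2: "(deriv^^n) (\<lambda>w. \<Phi> (l*w)) 0 = (deriv^^n) (\<lambda>w. C * \<Phi> w) 0"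
      by (rule higher_deriv_cong_ev[OF _ refl])
         (use eventually_nhds_in_open[of "ball 0 1" 0] func in \<open>auto elim!: eventually_mono\<close>)
    have h3: "(deriv^^n) (\<lambda>w. C * \<Phi> w) 0 = C * (deriv^^n) \<Phi> 0"
      by (rule higher_deriv_cmult[OF hol _ open_ball[of 0 1]]) simp
    have "l^n = C" using h1 h2 h3 nz by simp
    hence "\<nu>^(2*n) = \<zeta> * \<mu>^K" by (simp add: l_def C_def power_mult)
    hence "\<nu>^(2*n) * \<mu>^(2*n) = \<zeta> * \<mu>^(K + 2*n)" by (simp add: power_add)
    hence "\<zeta> * \<mu>^(K + 2*n) = 1" using mn by (simp add: power_mult_distrib[symmetric] mult.commute)
    hence "(\<zeta> * \<mu>^(K + 2*n))^N = 1" by simp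
    hence "\<mu>^((K + 2*n)*N) = 1" using N by (simp add: power_mult_distrib power_mult)
    moreover have "(K + 2*n)*N > 0" using K N by simp
    ultimately show False using mu_not_root[OF det1 mn trc ne inf] by blast
  qed
  have \<Phi>0: "\<Phi> w = 0" if "w \<in> ball 0 1" for w
  proof -
    have "(\<lambda>n. (deriv ^^ n) \<Phi> 0 / fact n * (w-0)^n) sums \<Phi> w"
      using holomorphic_power_series[OF hol that] by simp
    hence "(\<lambda>n. 0) sums \<Phi> w" by (simp add: coeff)
    thus ?thesis using sums_unique2 sums_zero by blast
  qed
  show ?thesis
  proof
    fix z assume z: "z \<in> upper_half_plane"
    hence Iz: "Im z > 0" by (simp add: upper_half_plane_def)
    define w where "w = (z-\<tau>)/(z - cnj \<tau>)"
    have wb: "w \<in> ball 0 1" using inv_Z(1)[OF Imt Iz] by (simp add: w_def)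
    have Zw: "Z w = z" using inv_Z(2)[OF Imt Iz] by (simp add: w_def Z_def)
    have "h z / (1-w)^K = 0" using \<Phi>0[OF wb] by (simp add: \<Phi>_def Zw)
    thus "h z = 0" using w1[OF wb] by simp
  qed
qed

end
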